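(* Let $n\ge 1$ and sample coupons $G_1,\dots,G_n$ independently with replacement, each sampling drawing each coupon with probability $1/n$. Let $A$ be a positive integer with $A\le n$, and let integers $k_1,\dots,k_A$ and $m_1,\dots,m_A$ satisfy $1\le k_1<\dots<k_A\le n$ and $\infty=m_0>m_1>\dots>m_A>m_{A+1}=0$. Let $U(\mathbf{m},\mathbf{k})$ be the number of samplings needed until, for every $j=1,\dots,A$, the number of distinct coupons of which at least $m_j$ copies have been collected is at least $k_j$. Let $\varphi_U(z)=\sum_{i\ge0}\mathrm{Prob}[U(\mathbf{m},\mathbf{k})>i]z^i$. Then \[ \varphi_U(z)=n\int_0^\infty e^{-nx}\Bigl\{e^{nxz}-\sum\prod_{j=0}^{A}\binom{i_{j+1}}{i_j}\bigl[S_{m_j}(xz)-S_{m_{j+1}}(xz)\bigr]^{i_{j+1}-i_j}\Bigr\}dx, \] where the sum is over all integer tuples $(i_0,i_1,\dots,i_{A+1})$ with $i_0=0$, $i_{A+1}=n$ and $k_j\le i_j\le i_{j+1}$ for $j=1,\dots,A$.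
   Context: For an integer $m\ge1$, $S_m(x)=\sum_{j=0}^{m-1}\frac{x^j}{j!}$; $S_m(x)=0$ for $m\le 0$; and $S_\infty(x)=e^x$ (so $S_{m_0}(x)=e^x$). *)

theory Defs
  imports "HOL-Analysis.Analysis" "HOL-Library.Extended_Nat"
begin

definition S_trunc :: "nat \<Rightarrow> complex \<Rightarrow> complex" where
  "S_trunc m x = (\<Sum>j<m. x ^ j / of_nat (fact j))"

definition S_ext :: "enat \<Rightarrow> complex \<Rightarrow> complex" where
  "S_ext m x = (case m of \<infinity> \<Rightarrow> exp x | enat r \<Rightarrow> S_trunc r x)"

definition m_ext :: "nat \<Rightarrow> (nat \<Rightarrow> nat) \<Rightarrow> nat \<Rightarrow> enat" where
  "m_ext A m j = (if j = 0 then \<infinity> else if j = A + 1 then 0 else enat (m j))"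

definition reached :: "nat \<Rightarrow> nat \<Rightarrow> (nat \<Rightarrow> nat) \<Rightarrow> (nat \<Rightarrow> nat) \<Rightarrow> nat list \<Rightarrow> bool" where
  "reached n A k m w \<longleftrightarrow>
     (\<forall>j\<in>{1..A}. k j \<le> card {c \<in> {0..<n}. m j \<le> count_list w c})"

definition samples :: "nat \<Rightarrow> nat \<Rightarrow> nat list set" where
  "samples n i = {w. length w = i \<and> set w \<subseteq> {0..<n}}"

definition U_gt :: "nat \<Rightarrow> nat \<Rightarrow> (nat \<Rightarrow> nat) \<Rightarrow> (nat \<Rightarrow> nat) \<Rightarrow> nat list \<Rightarrow> nat \<Rightarrow> bool" where
  "U_gt n A k m w i \<longleftrightarrow> (\<forall>t\<le>i. \<not> reached n A k m (take t w))"

text \<open>Prob[U(m,k) > i] under uniform independent sampling with replacement.\<close>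
definition prob_U_gt :: "nat \<Rightarrow> nat \<Rightarrow> (nat \<Rightarrow> nat) \<Rightarrow> (nat \<Rightarrow> nat) \<Rightarrow> nat \<Rightarrow> real" where
  "prob_U_gt n A k m i =
     real (card {w \<in> samples n i. U_gt n A k m w i}) / real n ^ i"

definition index_tuples :: "nat \<Rightarrow> nat \<Rightarrow> (nat \<Rightarrow> nat) \<Rightarrow> (nat \<Rightarrow> nat) set" where
  "index_tuples n A k = {i. i 0 = 0 \<and> i (A + 1) = n \<and>
      (\<forall>j\<in>{1..A}. k j \<le> i j \<and> i j \<le> i (j + 1)) \<and> (\<forall>j > A + 1. i j = 0)}"

end

theory Submission
  imports Defs "HOL-Analysis.FPS_Convergence"
begin

fun Fi :: "real \<Rightarrow> nat \<Rightarrow> real \<Rightarrow> real" where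
  "Fi a 0 y = - exp (-a*y) / a"
| "Fi a (Suc t) y = (real t + 1) / a * Fi a t y - exp (-a*y) * y^(Suc t) / a"

lemma Fi_deriv: assumes "a > 0" shows "(Fi a t has_real_derivative (y^t * exp(-a*y))) (at y)"
  using assms
proof (induction t arbitrary: y)
  case 0
  show ?case by (rule derivative_eq_intros refl | use 0 in simp)+
next
  case (Suc t)
  have "((\<lambda>y. (real t + 1) / a * Fi a t y - exp (-a*y) * y^(Suc t) / a) has_real_derivative
     ((real t + 1) / a * (y^t * exp(-a*y)) - ((exp (-a*y) * (-a)) * y^(Suc t) + exp (-a*y) * (real (Suc t) * y^t)) / a)) (at y)"
  proof -
    have h2: "((\<lambda>y. exp (-a*y) * y^(Suc t) / a) has_real_derivative (((exp (-a*y) * (-a)) * y^(Suc t) + exp (-a*y) * (real (Suc t) * y^t)) / a)) (at y)"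
      apply (rule derivative_eq_intros refl)+ using Suc.prems by (auto simp: field_simps)
    show ?thesis by (rule DERIV_diff[OF DERIV_cmult[OF Suc.IH[OF Suc.prems]] h2])
  qed
  moreover have "(real t + 1) / a * (y^t * exp(-a*y)) - ((exp (-a*y) * (-a)) * y^(Suc t) + exp (-a*y) * (real (Suc t) * y^t)) / a
      = y^Suc t * exp(-a*y)" using Suc.prems by (simp add: field_simps)
  ultimately show ?case by simp
qed

lemma Fi_0: assumes "a > 0" shows "Fi a t 0 = - fact t / a^Suc t"
proof (induction t)
  case (Suc t)
  have "Fi a (Suc t) 0 = (real t + 1) / a * (- fact t / a^Suc t)" by (simp add: Suc.IH)
  also have "\<dots> = - fact (Suc t) / a^Suc (Suc t)" using assms by (simp add: field_simps)
  finally show ?case .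
qed simp

lemma pow_exp_lim: fixes a :: real assumes "a > 0" shows "((\<lambda>y. y^k * exp(-a*y)) \<longlongrightarrow> 0) at_top"
proof -
  have "((\<lambda>y::real. (a*y)^k / exp (a*y)) \<longlongrightarrow> (0::real)) at_top"
    using tendsto_power_div_exp_0[of k] filterlim_tendsto_pos_mult_at_top[OF tendsto_const assms filterlim_ident]
    by (rule filterlim_compose[of "\<lambda>x. x ^ k / exp x"]) 
  then have "((\<lambda>y::real. (a*y)^k / exp (a*y) / a^k) \<longlongrightarrow> 0 / a^k) at_top"
    by (intro tendsto_divide) (use assms in auto)
  moreover have "(a*y)^k / exp (a*y) / a^k = y^k * exp(-a*y)" for y
    using assms by (simp add: power_mult_distrib exp_minus field_simps)
  ultimately show ?thesis by simp
qed

lemma Fi_lim: assumes "a > 0" shows "((\<lambda>y. Fi a t y) \<longlongrightarrow> 0) at_top"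
proof (induction t)
  case 0
  have "((\<lambda>y. - (y^0 * exp(-a*y)) / a) \<longlongrightarrow> - 0 / a) at_top"
    by (intro tendsto_divide tendsto_minus pow_exp_lim assms tendsto_const) (use assms in auto)
  then show ?case by simp
next
  case (Suc t)
  have "((\<lambda>y. (real t + 1) / a * Fi a t y - (y^(Suc t) * exp (-a*y)) / a) \<longlongrightarrow> (real t + 1) / a * 0 - 0 / a) at_top"
    by (intro tendsto_intros Suc pow_exp_lim assms) (use assms in auto)
  then show ?case by (simp add: mult.commute)
qed

lemma integral_power_exp:
  fixes a :: real assumes a: "a > 0"
  shows "((\<lambda>x. x^t * exp(-a*x)) has_integral (fact t / a^(Suc t))) {0..}"
proof (intro has_integral_to_inf integrable_continuous_interval continuous_intros)
  have "((\<lambda>x. x^t * exp(-a*x)) has_integral (Fi a t y - Fi a t 0)) {0..y}" if "y \<ge> 0" for y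
  proof (rule fundamental_theorem_of_calculus)
    show "0 \<le> y" by fact
    fix x assume "x \<in> {0..y}"
    show "(Fi a t has_vector_derivative x^t * exp(-a*x)) (at x within {0..y})"
      using has_field_derivative_at_within[OF Fi_deriv[OF a]]
      by (simp add: has_real_derivative_iff_has_vector_derivative)
  qed
  note I = this
  have "\<forall>\<^sub>F y in at_top. integral {0..y} (\<lambda>x. x^t * exp(-a*x)) = Fi a t y + fact t / a^(Suc t)"
    using eventually_ge_at_top[of "0::real"] proof (rule eventually_mono)
    fix y :: real assume "0 \<le> y"
    from integral_unique[OF I[OF this]] show "integral {0..y} (\<lambda>x. x^t * exp(-a*x)) = Fi a t y + fact t / a^(Suc t)"
      by (simp add: Fi_0[OF a])
  qed
  moreover have "((\<lambda>y. Fi a t y + fact t / a^(Suc t)) \<longlongrightarrow> 0 + fact t / a^(Suc t)) at_top"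
    by (intro tendsto_intros Fi_lim a)
  ultimately show "((\<lambda>y. integral {0..y} (\<lambda>x. x^t * exp(-a*x))) \<longlongrightarrow> fact t / a^(Suc t)) at_top"
    by (simp add: filterlim_cong tendsto_cong)
qed auto

definition E :: "nat set \<Rightarrow> complex fps" where
  "E S = Abs_fps (\<lambda>r. if r \<in> S then 1 / of_nat (fact r) else 0)"

definition shiftS :: "nat set \<Rightarrow> nat set" where "shiftS S = {r. Suc r \<in> S}"

definition fw :: "nat \<Rightarrow> nat \<Rightarrow> (nat \<Rightarrow> nat set) \<Rightarrow> nat" where
  "fw n t C = card {w \<in> samples n t. \<forall>c<n. count_list w c \<in> C c}"

lemma E_deriv: "fps_deriv (E S) = E (shiftS S)"
proof (rule fps_ext)
  fix r
  have "of_nat (Suc r) * (1 / of_nat (fact (Suc r)) :: complex) = 1 / of_nat (fact r)"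
  proof -
    have "(of_nat (fact r)::complex) \<noteq> 0" "(of_nat (Suc r)::complex) \<noteq> 0" by (simp, simp only: of_nat_eq_0_iff)
    moreover have "(1 + of_nat r::complex) \<noteq> 0" by (metis add.commute of_nat_Suc of_nat_eq_0_iff nat.distinct(1))
    then show ?thesis by (simp only: fact_Suc of_nat_mult) (simp add: field_simps del: of_nat_Suc)
  qed
  then show "fps_nth (fps_deriv (E S)) r = fps_nth (E (shiftS S)) r"
    by (simp add: E_def shiftS_def fps_deriv_nth del: of_nat_Suc)
qed

lemma prod_nth0: "fps_nth (\<Prod>c\<in>X. g c :: complex fps) 0 = (\<Prod>c\<in>X. fps_nth (g c) 0)"
  by (induction X rule: infinite_finite_induct) auto

lemma fps_deriv_prod_upd:
  assumes "finite X"
  shows "fps_deriv (\<Prod>c\<in>X. g c :: complex fps) = (\<Sum>c\<in>X. \<Prod>c'\<in>X. (g(c := fps_deriv (g c))) c')"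
  using assms
proof (induction X rule: finite_induct)
  case (insert x X)
  have "fps_deriv (\<Prod>c\<in>insert x X. g c) = fps_deriv (g x) * (\<Prod>c\<in>X. g c) + g x * fps_deriv (\<Prod>c\<in>X. g c)"
    using insert by (simp add: fps_deriv_mult algebra_simps)
  also have "fps_deriv (\<Prod>c\<in>X. g c) = (\<Sum>c\<in>X. \<Prod>c'\<in>X. (g(c := fps_deriv (g c))) c')" by (rule insert.IH)
  also have "fps_deriv (g x) * (\<Prod>c\<in>X. g c) = (\<Prod>c'\<in>insert x X. (g(x := fps_deriv (g x))) c')"
    using insert by (auto intro!: prod.cong)
  also have "g x * (\<Sum>c\<in>X. \<Prod>c'\<in>X. (g(c := fps_deriv (g c))) c') = (\<Sum>c\<in>X. \<Prod>c'\<in>insert x X. (g(c := fps_deriv (g c))) c')"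
    using insert by (auto simp: sum_distrib_left intro!: sum.cong) 
  finally show ?case using insert by simp
qed simp

lemma samples_0: "samples n 0 = {[]}" by (auto simp: samples_def)

lemma fw_0: "fw n 0 C = (if \<forall>c<n. 0 \<in> C c then 1 else 0)"
proof -
  have "{w \<in> samples n 0. \<forall>c<n. count_list w c \<in> C c} = (if \<forall>c<n. 0 \<in> C c then {[]} else {})"
    by (auto simp: samples_0)
  then show ?thesis by (simp add: fw_def)
qed

lemma fw_Suc: "fw n (Suc t) C = (\<Sum>c<n. fw n t (C(c := shiftS (C c))))"
proof -
  let ?S = "{w \<in> samples n (Suc t). \<forall>c<n. count_list w c \<in> C c}"
  have fin: "finite (samples n i)" for i
  proof -
    have "samples n i \<subseteq> {w. set w \<subseteq> {0..<n} \<and> length w = i}" by (auto simp: samples_def)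
    moreover have "finite {w. set w \<subseteq> {0..<n} \<and> length w = i}" by (rule finite_lists_length_eq) auto
    ultimately show ?thesis by (rule finite_subset)
  qed
  have "card ?S = (\<Sum>c<n. card {w \<in> ?S. last w = c})"
    unfolding card_eq_sum
  proof (rule sum.group[symmetric])
    show "finite ?S" using fin[of "Suc t"] by auto
    show "last ` ?S \<subseteq> {..<n}"
    proof
      fix c assume "c \<in> last ` ?S"
      then obtain w where w: "w \<in> ?S" "c = last w" by blast
      then have "w \<noteq> []" "set w \<subseteq> {0..<n}" by (auto simp: samples_def)
      then have "last w \<in> set w" by simp
      then have "last w < n" using \<open>set w \<subseteq> {0..<n}\<close> by auto
      then show "c \<in> {..<n}" using w(2) by simp
    qed
  qed simp
  also have "\<dots> = (\<Sum>c<n. fw n t (C(c := shiftS (C c))))"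
  proof (rule sum.cong[OF refl])
    fix c assume c: "c \<in> {..<n}"
    have "{w \<in> ?S. last w = c} = (\<lambda>w. w @ [c]) ` {w \<in> samples n t. \<forall>d<n. count_list w d \<in> (C(c := shiftS (C c))) d}"
    proof (intro equalityI subsetI)
      fix w assume w: "w \<in> {w \<in> ?S. last w = c}"
      then have "w \<noteq> []" by (auto simp: samples_def)
      then have "w = butlast w @ [c]" using w append_butlast_last_id[of w] by simp
      then obtain v where v: "w = v @ [c]" by blast
      show "w \<in> (\<lambda>w. w @ [c]) ` {w \<in> samples n t. \<forall>d<n. count_list w d \<in> (C(c := shiftS (C c))) d}"
      proof (rule image_eqI[where x=v and f="\<lambda>w. w @ [c]"])
        show "w = v @ [c]" by (rule v)
        have cv: "\<forall>d<n. count_list v d + (if c = d then 1 else 0) \<in> C d" using w unfolding v by auto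
        have "\<forall>d<n. count_list v d \<in> (C(c := shiftS (C c))) d"
        proof (intro allI impI)
          fix d assume d: "d < n"
          show "count_list v d \<in> (C(c := shiftS (C c))) d"
          proof (cases "d = c")
            case True then show ?thesis using cv[rule_format, of c] d by (simp add: shiftS_def)
          next
            case False then show ?thesis using cv[rule_format, of d] d by simp
          qed
        qed
        moreover have "v \<in> samples n t" using w unfolding v by (simp add: samples_def)
        ultimately show "v \<in> {w \<in> samples n t. \<forall>d<n. count_list w d \<in> (C(c := shiftS (C c))) d}" by simp
      qed
    next
      fix w assume "w \<in> (\<lambda>w. w @ [c]) ` {w \<in> samples n t. \<forall>d<n. count_list w d \<in> (C(c := shiftS (C c))) d}"
      then obtain v where v: "w = v @ [c]" "v \<in> samples n t" "\<forall>d<n. count_list v d \<in> (C(c := shiftS (C c))) d" by blast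
      show "w \<in> {w \<in> ?S. last w = c}"
      proof -
        have "\<forall>d<n. count_list w d \<in> C d"
        proof (intro allI impI)
          fix d assume d: "d < n"
          show "count_list w d \<in> C d"
          proof (cases "d = c")
            case True then show ?thesis using v(3)[rule_format, of c] d by (simp add: v(1) shiftS_def)
          next
            case False then show ?thesis using v(3)[rule_format, of d] d by (simp add: v(1))
          qed
        qed
        moreover have "w \<in> samples n (Suc t)" using v c by (simp add: samples_def)
        ultimately show ?thesis using v by simp
      qed
    qed
    then show "card {w \<in> ?S. last w = c} = fw n t (C(c := shiftS (C c)))"
      by (simp add: fw_def card_image inj_on_def)
  qed
  finally show ?thesis by (simp add: fw_def)
qed

lemma egf_words: "of_nat (fw n t C) = of_nat (fact t) * fps_nth (\<Prod>c<n. E (C c)) t"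
proof (induction t arbitrary: C)
  case 0
  show ?case by (simp add: fw_0 prod_nth0 E_def prod_zero_iff) blast
next
  case (Suc t)
  have D: "fps_deriv (\<Prod>c<n. E (C c)) = (\<Sum>c<n. \<Prod>c'<n. E ((C(c := shiftS (C c))) c'))"
    by (subst fps_deriv_prod_upd) (auto simp: E_deriv intro!: sum.cong prod.cong)
  have "of_nat (fact (Suc t)) * fps_nth (\<Prod>c<n. E (C c)) (Suc t) = of_nat (fact t) * fps_nth (fps_deriv (\<Prod>c<n. E (C c))) t"
    by (simp add: fps_deriv_nth algebra_simps)
  also have "\<dots> = of_nat (fact t) * fps_nth (\<Sum>c<n. \<Prod>c'<n. E ((C(c := shiftS (C c))) c')) t"
    by (simp only: D)
  also have "\<dots> = (\<Sum>c<n. of_nat (fw n t (C(c := shiftS (C c)))))"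
    by (simp add: fps_sum_nth sum_distrib_left Suc.IH)
  also have "\<dots> = of_nat (fw n (Suc t) C)" by (simp add: fw_Suc)
  finally show ?case by simp
qed

lemma count_levels:
  assumes "finite X" "card X = i (Suc a)" "\<forall>j\<le>a. i j \<le> i (Suc j)" "i 0 = 0"
  shows "card {L \<in> X \<rightarrow>\<^sub>E {0..a}. \<forall>j\<in>{1..a}. card {c\<in>X. L c < j} = i j}
         = (\<Prod>j\<le>a. i (Suc j) choose i j)"
  using assms
proof (induction a arbitrary: X)
  case 0
  have "{L \<in> X \<rightarrow>\<^sub>E {0..0::nat}. \<forall>j\<in>{1..0}. card {c\<in>X. L c < j} = i j} = X \<rightarrow>\<^sub>E {0}" by auto
  then show ?case using 0 by (simp add: card_PiE)
next
  case (Suc a)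
  let ?Z = "{L \<in> X \<rightarrow>\<^sub>E {0..Suc a}. \<forall>j\<in>{1..Suc a}. card {c\<in>X. L c < j} = i j}"
  let ?Z' = "\<lambda>Y. {L \<in> Y \<rightarrow>\<^sub>E {0..a}. \<forall>j\<in>{1..a}. card {c\<in>Y. L c < j} = i j}"
  let ?YS = "{Y. Y \<subseteq> X \<and> card Y = i (Suc a)}"
  define phi where "phi = (\<lambda>L. ({c\<in>X. L c < Suc a}, restrict L {c\<in>X. L c < Suc a}))"
  define psi where "psi = (\<lambda>(Y, L'::'a \<Rightarrow> nat). (\<lambda>c. if c \<in> Y then L' c else if c \<in> X then Suc a else undefined))"
  have bij: "bij_betw phi ?Z (Sigma ?YS ?Z')"
  proof (rule bij_betwI[where g = psi])
    show "phi \<in> ?Z \<rightarrow> Sigma ?YS ?Z'"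
    proof
      fix L assume L: "L \<in> ?Z"
      let ?Y = "{c\<in>X. L c < Suc a}"
      have "card ?Y = i (Suc a)" using L by auto
      moreover have "restrict L ?Y \<in> ?Y \<rightarrow>\<^sub>E {0..a}" by auto
      moreover have "card {c\<in>?Y. restrict L ?Y c < j} = i j" if "j \<in> {1..a}" for j
      proof -
        have "{c\<in>?Y. restrict L ?Y c < j} = {c\<in>X. L c < j}" using that by auto
        then show ?thesis using L that by auto
      qed
      ultimately show "phi L \<in> Sigma ?YS ?Z'" unfolding phi_def by auto
    qed
  next
    show "psi \<in> Sigma ?YS ?Z' \<rightarrow> ?Z"
    proof
      fix p assume p: "p \<in> Sigma ?YS ?Z'"
      obtain Y L' where pe: "p = (Y, L')" by (cases p)
      from p have "Y \<in> ?YS" "L' \<in> ?Z' Y" unfolding pe by (simp_all only: mem_Sigma_iff)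
      then have Y: "Y \<subseteq> X" "card Y = i (Suc a)" and L': "L' \<in> Y \<rightarrow>\<^sub>E {0..a}"
        "\<forall>j\<in>{1..a}. card {c\<in>Y. L' c < j} = i j" by blast+
      let ?L = "\<lambda>c. if c \<in> Y then L' c else if c \<in> X then Suc a else undefined"
      have "?L \<in> X \<rightarrow>\<^sub>E {0..Suc a}" using Y L' by (auto simp: PiE_def Pi_def extensional_def)
      moreover have "card {c\<in>X. ?L c < j} = i j" if "j \<in> {1..Suc a}" for j
      proof -
        have "{c\<in>X. ?L c < j} = {c\<in>Y. L' c < j}" using Y that by auto
        moreover have "card {c\<in>Y. L' c < j} = i j"
        proof (cases "j = Suc a")
          case True
          have "{c\<in>Y. L' c < j} = Y" using L' True by (auto simp: PiE_def Pi_def less_Suc_eq_le)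
          then show ?thesis using Y True by simp
        next
          case False then show ?thesis using L' that by auto
        qed
        ultimately show ?thesis by simp
      qed
      ultimately show "psi p \<in> ?Z" unfolding psi_def pe by auto
    qed
  next
    fix L assume L: "L \<in> ?Z"
    show "psi (phi L) = L"
    proof
      fix c show "psi (phi L) c = L c"
        using L by (auto simp: psi_def phi_def PiE_def extensional_def Pi_def)
    qed
  next
    fix p assume p: "p \<in> Sigma ?YS ?Z'"
    obtain Y L' where pe: "p = (Y, L')" by (cases p)
    with p have Y: "Y \<subseteq> X" and L': "L' \<in> Y \<rightarrow>\<^sub>E {0..a}" by auto
    have 1: "{c\<in>X. psi p c < Suc a} = Y" using Y L' by (auto simp: psi_def pe PiE_def Pi_def less_Suc_eq_le)
    have 2: "restrict (psi p) Y = L'" using L' by (auto simp: psi_def pe PiE_def extensional_def)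
    show "phi (psi p) = p" unfolding phi_def 1 2 by (simp add: pe)
  qed
  have finYS: "finite ?YS" using Suc.prems(1) by (auto intro: finite_subset[of _ "Pow X"])
  have "card ?Z = card (Sigma ?YS ?Z')" by (rule bij_betw_same_card[OF bij])
  also have "\<dots> = (\<Sum>Y\<in>?YS. card (?Z' Y))"
    by (rule card_SigmaI) (use finYS Suc.prems(1) in \<open>auto intro: finite_subset[OF _ finite_PiE[of _ "\<lambda>_. {0..a}"]] rev_finite_subset\<close>)
  also have "\<dots> = (\<Sum>Y\<in>?YS. (\<Prod>j\<le>a. i (Suc j) choose i j))"
    using Suc.prems by (intro sum.cong refl Suc.IH) (auto intro: finite_subset)
  also have "\<dots> = (card X choose i (Suc a)) * (\<Prod>j\<le>a. i (Suc j) choose i j)"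
    using n_subsets[OF Suc.prems(1), of "i (Suc a)"] by simp
  also have "\<dots> = (\<Prod>j\<le>Suc a. i (Suc j) choose i j)" using Suc.prems(2) by (simp add: mult.commute)
  finally show ?case .
qed

lemma index_tuples_le:
  assumes "i \<in> index_tuples n A k" "j \<le> A + 1"
  shows "i j \<le> n"
proof (cases "j = 0")
  case True then show ?thesis using assms by (simp add: index_tuples_def)
next
  case False
  have "i j \<le> i (A + 1)" using assms(2)
  proof (induction j rule: inc_induct)
    case (step m)
    have "m \<ge> 1" using False step(1) by simp
    then have "i m \<le> i (Suc m)" using step(2) assms(1) by (auto simp: index_tuples_def)
    then show ?case using step(3) by simp
  qed simp
  then show ?thesis using assms(1) by (simp add: index_tuples_def)
qed

lemma finite_index_tuples: "finite (index_tuples n A k)"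
proof -
  have "index_tuples n A k \<subseteq> (\<lambda>f j. if j \<le> A + 1 then f j else 0) ` ({..A+1} \<rightarrow>\<^sub>E {..n})"
  proof
    fix i assume i: "i \<in> index_tuples n A k"
    show "i \<in> (\<lambda>f j. if j \<le> A + 1 then f j else 0) ` ({..A+1} \<rightarrow>\<^sub>E {..n})"
    proof (rule image_eqI[where x = "restrict i {..A+1}"])
      show "i = (\<lambda>j. if j \<le> A + 1 then restrict i {..A+1} j else 0)"
        using i by (auto simp: index_tuples_def)
      show "restrict i {..A+1} \<in> {..A+1} \<rightarrow>\<^sub>E {..n}" using index_tuples_le[OF i] by auto
    qed
  qed
  then show ?thesis by (rule finite_subset) (auto intro: finite_PiE)
qed

lemma tuple_sum:
  fixes x :: "nat \<Rightarrow> 'r::comm_semiring_1"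
  shows "(\<Sum>L \<in> {L \<in> {0..<n} \<rightarrow>\<^sub>E {0..A}. \<forall>j\<in>{1..A}. k j \<le> card {c\<in>{0..<n}. L c < j}}. \<Prod>c\<in>{0..<n}. x (L c))
       = (\<Sum>i\<in>index_tuples n A k. \<Prod>j\<in>{0..A}. of_nat (i (j+1) choose i j) * x j ^ (i (j+1) - i j))"
proof -
  define X where "X = {0..<n::nat}"
  define R where "R = {L \<in> X \<rightarrow>\<^sub>E {0..A}. \<forall>j\<in>{1..A}. k j \<le> card {c\<in>X. L c < j}}"
  define T where "T = index_tuples n A k"
  define prof where "prof = (\<lambda>L j. if j \<le> A + 1 then card {c\<in>X. L c < j} else 0)"
  have finX: "finite X" and cX: "card X = n" by (simp_all add: X_def)
  have finR: "finite R" unfolding R_def by (rule finite_subset[OF _ finite_PiE[of X "\<lambda>_. {0..A}"]]) (auto simp: finX)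
  have finT: "finite T" by (simp add: T_def finite_index_tuples)
  have profn: "prof L (A + 1) = n" if "L \<in> X \<rightarrow>\<^sub>E {0..A}" for L
  proof -
    have "{c\<in>X. L c < A + 1} = X" using that by (auto simp: PiE_def Pi_def)
    then show ?thesis by (simp add: prof_def cX)
  qed
  have img: "prof ` R \<subseteq> T"
  proof
    fix i assume "i \<in> prof ` R"
    then obtain L where L: "L \<in> R" "i = prof L" by blast
    have "i 0 = 0" using L by (simp add: prof_def)
    moreover have "i (A + 1) = n" using L profn by (simp add: R_def)
    moreover have "k j \<le> i j \<and> i j \<le> i (j + 1)" if "j \<in> {1..A}" for j
    proof
      show "k j \<le> i j" using L that by (simp add: R_def prof_def)
      have "card {c\<in>X. L c < j} \<le> card {c\<in>X. L c < j + 1}" by (rule card_mono) (auto simp: finX)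
      then show "i j \<le> i (j + 1)" using L that by (simp add: prof_def)
    qed
    moreover have "\<forall>j > A + 1. i j = 0" using L by (simp add: prof_def)
    ultimately show "i \<in> T" by (simp add: T_def index_tuples_def)
  qed
  have fib: "{L \<in> R. prof L = i} = {L \<in> X \<rightarrow>\<^sub>E {0..A}. \<forall>j\<in>{1..A}. card {c\<in>X. L c < j} = i j}"
    if i: "i \<in> T" for i
  proof (intro equalityI subsetI)
    fix L assume "L \<in> {L \<in> R. prof L = i}"
    then show "L \<in> {L \<in> X \<rightarrow>\<^sub>E {0..A}. \<forall>j\<in>{1..A}. card {c\<in>X. L c < j} = i j}"
      by (auto simp: R_def prof_def)
  next
    fix L assume L: "L \<in> {L \<in> X \<rightarrow>\<^sub>E {0..A}. \<forall>j\<in>{1..A}. card {c\<in>X. L c < j} = i j}"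
    have "L \<in> R" using L i by (auto simp: R_def T_def index_tuples_def)
    moreover have "prof L = i"
    proof
      fix j
      show "prof L j = i j"
      proof (cases "j = 0 \<or> j = A + 1 \<or> j > A + 1")
        case True then show ?thesis using L i profn[of L] by (auto simp: T_def index_tuples_def prof_def)
      next
        case False then show ?thesis using L by (auto simp: prof_def)
      qed
    qed
    ultimately show "L \<in> {L \<in> R. prof L = i}" by simp
  qed
  have termeq: "(\<Prod>c\<in>X. x (L c)) = (\<Prod>j\<in>{0..A}. x j ^ (prof L (j + 1) - prof L j))"
    if L: "L \<in> X \<rightarrow>\<^sub>E {0..A}" for L
  proof -
    have "(\<Prod>c\<in>X. x (L c)) = (\<Prod>j\<in>{0..A}. \<Prod>c\<in>{c\<in>X. L c = j}. x (L c))"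
      by (rule prod.group[symmetric]) (use L finX in auto)
    also have "\<dots> = (\<Prod>j\<in>{0..A}. x j ^ card {c\<in>X. L c = j})"
    proof (rule prod.cong[OF refl])
      fix j
      have "(\<Prod>c\<in>{c\<in>X. L c = j}. x (L c)) = (\<Prod>c\<in>{c\<in>X. L c = j}. x j)" by (rule prod.cong) auto
      then show "(\<Prod>c\<in>{c\<in>X. L c = j}. x (L c)) = x j ^ card {c\<in>X. L c = j}" by simp
    qed
    also have "\<dots> = (\<Prod>j\<in>{0..A}. x j ^ (prof L (j + 1) - prof L j))"
    proof (rule prod.cong[OF refl])
      fix j assume j: "j \<in> {0..A}"
      have "{c\<in>X. L c < j + 1} = {c\<in>X. L c < j} \<union> {c\<in>X. L c = j}" by auto
      then have "card {c\<in>X. L c < j + 1} = card {c\<in>X. L c < j} + card {c\<in>X. L c = j}"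
        by (simp only:) (rule card_Un_disjoint, auto simp: finX)
      then show "x j ^ card {c\<in>X. L c = j} = x j ^ (prof L (j + 1) - prof L j)" using j by (simp add: prof_def)
    qed
    finally show ?thesis .
  qed
  have "(\<Sum>L\<in>R. \<Prod>c\<in>X. x (L c)) = (\<Sum>i\<in>T. \<Sum>L\<in>{L \<in> R. prof L = i}. \<Prod>c\<in>X. x (L c))"
    by (rule sum.group[symmetric, OF finR finT img])
  also have "\<dots> = (\<Sum>i\<in>T. \<Prod>j\<in>{0..A}. of_nat (i (j+1) choose i j) * x j ^ (i (j+1) - i j))"
  proof (rule sum.cong[OF refl])
    fix i assume i: "i \<in> T"
    have "(\<Sum>L\<in>{L \<in> R. prof L = i}. \<Prod>c\<in>X. x (L c)) = (\<Sum>L\<in>{L \<in> R. prof L = i}. \<Prod>j\<in>{0..A}. x j ^ (i (j + 1) - i j))"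
      by (rule sum.cong[OF refl]) (auto simp: termeq R_def)
    also have "\<dots> = of_nat (card {L \<in> R. prof L = i}) * (\<Prod>j\<in>{0..A}. x j ^ (i (j + 1) - i j))"
      by simp
    also have "card {L \<in> R. prof L = i} = (\<Prod>j\<le>A. i (Suc j) choose i j)"
      unfolding fib[OF i]
    proof (rule count_levels[OF finX])
      show "card X = i (Suc A)" using i cX by (simp add: T_def index_tuples_def)
      show "i 0 = 0" using i by (simp add: T_def index_tuples_def)
      show "\<forall>j\<le>A. i j \<le> i (Suc j)"
      proof (intro allI impI)
        fix j assume "j \<le> A"
        then show "i j \<le> i (Suc j)" using i by (cases "j = 0") (auto simp: T_def index_tuples_def)
      qed
    qed
    also have "of_nat (\<Prod>j\<le>A. i (Suc j) choose i j) * (\<Prod>j\<in>{0..A}. x j ^ (i (j + 1) - i j))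
       = (\<Prod>j\<in>{0..A}. of_nat (i (j+1) choose i j) * x j ^ (i (j+1) - i j))"
      by (simp add: prod.distrib atLeast0AtMost)
    finally show "(\<Sum>L\<in>{L \<in> R. prof L = i}. \<Prod>c\<in>X. x (L c)) = (\<Prod>j\<in>{0..A}. of_nat (i (j+1) choose i j) * x j ^ (i (j+1) - i j))" .
  qed
  finally show ?thesis by (simp add: R_def X_def T_def)
qed

definition ent :: "complex fps \<Rightarrow> bool" where "ent f \<longleftrightarrow> fps_conv_radius f = \<infinity>"

lemma ent_add: "ent f \<Longrightarrow> ent g \<Longrightarrow> ent (f + g)"
  using fps_conv_radius_add[of f g] by (simp add: ent_def)
lemma ent_diff: "ent f \<Longrightarrow> ent g \<Longrightarrow> ent (f - g)"
  using fps_conv_radius_diff[of f g] by (simp add: ent_def)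
lemma ent_mult: "ent f \<Longrightarrow> ent g \<Longrightarrow> ent (f * g)"
  using fps_conv_radius_mult[of f g] by (simp add: ent_def)
lemma ent_power: "ent f \<Longrightarrow> ent (f ^ k)"
  using fps_conv_radius_power[of f k] by (simp add: ent_def)
lemma ent_const: "ent (fps_const c)" by (simp add: ent_def)
lemma ent_of_nat: "ent (of_nat c)" by (simp add: ent_def fps_of_nat[symmetric])
lemma ent_X_power: "ent (fps_X ^ k)" by (simp add: ent_def)
lemma ent_exp: "ent (fps_exp c)" by (simp add: ent_def)
lemma ent_sum: "(\<And>x. x \<in> S \<Longrightarrow> ent (f x)) \<Longrightarrow> ent (\<Sum>x\<in>S. f x)"
  by (induction S rule: infinite_finite_induct) (auto simp: ent_def[of 0] intro: ent_add)
lemma ent_prod: "(\<And>x. x \<in> S \<Longrightarrow> ent (f x)) \<Longrightarrow> ent (\<Prod>x\<in>S. f x)"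
  by (induction S rule: infinite_finite_induct) (auto simp: ent_def[of 1] intro: ent_mult)

lemma ent_norm: "ent f \<Longrightarrow> ereal (norm z) < fps_conv_radius f" by (simp add: ent_def)

lemma eval_add: "ent f \<Longrightarrow> ent g \<Longrightarrow> eval_fps (f + g) z = eval_fps f z + eval_fps g z"
  by (intro eval_fps_add ent_norm)
lemma eval_diff: "ent f \<Longrightarrow> ent g \<Longrightarrow> eval_fps (f - g) z = eval_fps f z - eval_fps g z"
  by (intro eval_fps_diff ent_norm)
lemma eval_mult: "ent f \<Longrightarrow> ent g \<Longrightarrow> eval_fps (f * g) z = eval_fps f z * eval_fps g z"
  by (intro eval_fps_mult ent_norm)
lemma eval_power: "ent f \<Longrightarrow> eval_fps (f ^ k) z = eval_fps f z ^ k"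
  by (intro eval_fps_power ent_norm)
lemma eval_sum: "(\<And>x. x \<in> S \<Longrightarrow> ent (f x)) \<Longrightarrow> eval_fps (\<Sum>x\<in>S. f x) z = (\<Sum>x\<in>S. eval_fps (f x) z)"
  by (induction S rule: infinite_finite_induct) (auto simp: eval_add ent_sum)
lemma eval_prod: "(\<And>x. x \<in> S \<Longrightarrow> ent (f x)) \<Longrightarrow> eval_fps (\<Prod>x\<in>S. f x) z = (\<Prod>x\<in>S. eval_fps (f x) z)"
  by (induction S rule: infinite_finite_induct) (auto simp: eval_mult ent_prod)
lemma eval_of_nat: "eval_fps (of_nat c) z = of_nat c"
  by (simp add: fps_of_nat[symmetric])

definition Pe :: "enat \<Rightarrow> complex fps" where
  "Pe e = (case e of \<infinity> \<Rightarrow> fps_exp 1 | enat r \<Rightarrow> (\<Sum>j<r. fps_const (1 / of_nat (fact j)) * fps_X ^ j))"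

lemma ent_Pe: "ent (Pe e)"
  by (cases e) (auto simp: Pe_def intro!: ent_sum ent_mult ent_const ent_X_power ent_exp)

lemma eval_Pe: "eval_fps (Pe e) z = S_ext e z"
proof (cases e)
  case (enat r)
  have "eval_fps (Pe e) z = (\<Sum>j<r. eval_fps (fps_const (1 / of_nat (fact j)) * fps_X ^ j) z)"
    unfolding enat Pe_def by (simp add: eval_sum ent_mult ent_const ent_X_power)
  also have "\<dots> = S_trunc r z"
    by (simp add: eval_mult ent_const ent_X_power S_trunc_def)
  finally show ?thesis by (simp add: enat S_ext_def)
qed (simp add: Pe_def S_ext_def)

lemma nth_Pe: "fps_nth (Pe e) t = (if enat t < e then 1 / of_nat (fact t) else 0)"
proof (cases e)
  case (enat r)
  have "fps_nth (Pe e) t = (\<Sum>j<r. (1 / of_nat (fact j)) * (if t = j then 1 else 0))"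
    unfolding enat Pe_def by (simp add: fps_sum_nth fps_X_power_iff)
  also have "\<dots> = (if t < r then 1 / of_nat (fact t) else 0)"
    by (simp add: if_distrib[of "\<lambda>x. _ * x"] sum.delta' cong: if_cong)
  finally show ?thesis by (simp add: enat)
qed (simp add: Pe_def)

definition lev :: "nat \<Rightarrow> (nat \<Rightarrow> nat) \<Rightarrow> nat \<Rightarrow> nat" where
  "lev A m r = card {j\<in>{1..A}. r < m j}"

lemma m_mono:
  fixes m :: "nat \<Rightarrow> nat" and j j' A :: nat
  assumes hm: "\<forall>j\<in>{1..<A}. m (j + 1) < m j" and "1 \<le> j" "j \<le> j'" "j' \<le> A"
  shows "m j' \<le> m j"
  using assms(3,4)
proof (induction j' rule: dec_induct)
  case (step q)
  have "m (q + 1) < m q" using hm step assms(2) by auto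
  then show ?case using step by simp
qed simp

lemma lev_le: "lev A m r \<le> A"
proof -
  have "lev A m r \<le> card {1..A}" unfolding lev_def by (rule card_mono) auto
  then show ?thesis by simp
qed

lemma lev_less:
  assumes hm: "\<forall>j\<in>{1..<A}. m (j + 1) < m j" and j: "j \<in> {1..A}"
  shows "lev A m r < j \<longleftrightarrow> m j \<le> r"
proof
  assume l: "lev A m r < j"
  show "m j \<le> r"
  proof (rule ccontr)
    assume "\<not> m j \<le> r"
    then have "{1..j} \<subseteq> {j'\<in>{1..A}. r < m j'}" using j m_mono[OF hm] by fastforce
    then have "card {1..j} \<le> lev A m r" unfolding lev_def by (intro card_mono) auto
    then show False using l by simp
  qed
next
  assume mr: "m j \<le> r"
  have "{j'\<in>{1..A}. r < m j'} \<subseteq> {1..<j}"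
  proof
    fix j' assume j': "j' \<in> {j'\<in>{1..A}. r < m j'}"
    show "j' \<in> {1..<j}"
    proof (rule ccontr)
      assume "j' \<notin> {1..<j}"
      then have "j \<le> j'" using j' by auto
      then have "m j' \<le> m j" using m_mono[OF hm] j j' by auto
      then show False using j' mr by auto
    qed
  qed
  then have "lev A m r \<le> card {1..<j}" unfolding lev_def by (intro card_mono) auto
  then show "lev A m r < j" using j by auto
qed

lemma m_ext_le_iff:
  assumes hm: "\<forall>j\<in>{1..<A}. m (j + 1) < m j" and "j \<le> A + 1"
  shows "m_ext A m j \<le> enat r \<longleftrightarrow> lev A m r < j"
proof -
  consider "j = 0" | "j = A + 1" | "j \<in> {1..A}" using assms(2) by fastforce
  then show ?thesis
  proof cases
    case 1 then show ?thesis by (simp add: m_ext_def)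
  next
    case 2 then show ?thesis using lev_le[of A m r] by (simp add: m_ext_def)
  next
    case 3 then show ?thesis using lev_less[OF hm 3] by (auto simp: m_ext_def)
  qed
qed

lemma E_lev:
  assumes hm: "\<forall>j\<in>{1..<A}. m (j + 1) < m j" and "j \<le> A"
  shows "E {r. lev A m r = j} = Pe (m_ext A m j) - Pe (m_ext A m (j + 1))"
proof (rule fps_ext)
  fix t
  have 1: "enat t < m_ext A m j \<longleftrightarrow> \<not> lev A m t < j"
    using m_ext_le_iff[OF hm, of j t] assms(2) by (auto simp: not_le[symmetric])
  have 2: "enat t < m_ext A m (j + 1) \<longleftrightarrow> \<not> lev A m t < j + 1"
    using m_ext_le_iff[OF hm, of "j + 1" t] assms(2) by (auto simp: not_le[symmetric])
  show "fps_nth (E {r. lev A m r = j}) t = fps_nth (Pe (m_ext A m j) - Pe (m_ext A m (j + 1))) t"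
    unfolding fps_sub_nth nth_Pe 1 2 by (auto simp: E_def)
qed

lemma reached_lev:
  assumes hm: "\<forall>j\<in>{1..<A}. m (j + 1) < m j"
  shows "reached n A k m w \<longleftrightarrow> (\<forall>j\<in>{1..A}. k j \<le> card {c\<in>{0..<n}. lev A m (count_list w c) < j})"
proof -
  have "{c\<in>{0..<n}. lev A m (count_list w c) < j} = {c\<in>{0..<n}. m j \<le> count_list w c}" if "j \<in> {1..A}" for j
    using lev_less[OF hm that] by auto
  then show ?thesis unfolding reached_def by auto
qed

lemma finite_samples: "finite (samples n t)"
proof -
  have "samples n t = {w. set w \<subseteq> {0..<n} \<and> length w = t}" by (auto simp: samples_def)
  then show ?thesis by (simp add: finite_lists_length_eq)
qed

lemma card_samples: "card (samples n t) = n ^ t"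
proof -
  have "samples n t = {w. set w \<subseteq> {0..<n} \<and> length w = t}" by (auto simp: samples_def)
  then show ?thesis by (simp add: card_lists_length_eq)
qed

definition Rset :: "nat \<Rightarrow> nat \<Rightarrow> (nat \<Rightarrow> nat) \<Rightarrow> (nat \<Rightarrow> nat) set" where
  "Rset n A k = {L \<in> {0..<n} \<rightarrow>\<^sub>E {0..A}. \<forall>j\<in>{1..A}. k j \<le> card {c\<in>{0..<n}. L c < j}}"

lemma Rw_formula:
  assumes hm: "\<forall>j\<in>{1..<A}. m (j + 1) < m j"
  shows "card {w\<in>samples n t. reached n A k m w} = (\<Sum>L\<in>Rset n A k. fw n t (\<lambda>c. {r. lev A m r = L c}))"
proof -
  let ?S = "{w\<in>samples n t. reached n A k m w}"
  define g where "g = (\<lambda>w. restrict (\<lambda>c. lev A m (count_list w c)) {0..<n})"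
  have finR: "finite (Rset n A k)" unfolding Rset_def
    by (rule finite_subset[OF _ finite_PiE[of "{0..<n}" "\<lambda>_. {0..A}"]]) auto
  have img: "g ` ?S \<subseteq> Rset n A k"
  proof
    fix L assume "L \<in> g ` ?S"
    then obtain w where w: "w \<in> ?S" "L = g w" by blast
    have "{c\<in>{0..<n}. L c < j} = {c\<in>{0..<n}. lev A m (count_list w c) < j}" for j
      using w by (auto simp: g_def)
    then show "L \<in> Rset n A k" using w reached_lev[OF hm] lev_le[of A m]
      by (auto simp: Rset_def g_def)
  qed
  have "card ?S = (\<Sum>L\<in>Rset n A k. card {w\<in>?S. g w = L})"
    unfolding card_eq_sum by (rule sum.group[symmetric]) (use finite_samples img finR in auto)
  also have "\<dots> = (\<Sum>L\<in>Rset n A k. fw n t (\<lambda>c. {r. lev A m r = L c}))"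
  proof (rule sum.cong[OF refl])
    fix L assume L: "L \<in> Rset n A k"
    have "{w\<in>?S. g w = L} = {w \<in> samples n t. \<forall>c<n. count_list w c \<in> {r. lev A m r = L c}}"
    proof (intro equalityI subsetI)
      fix w assume "w \<in> {w\<in>?S. g w = L}"
      then show "w \<in> {w \<in> samples n t. \<forall>c<n. count_list w c \<in> {r. lev A m r = L c}}"
        by (auto simp: g_def dest: fun_cong)
    next
      fix w assume w: "w \<in> {w \<in> samples n t. \<forall>c<n. count_list w c \<in> {r. lev A m r = L c}}"
      have gw: "g w = L"
      proof
        fix c show "g w c = L c" using w L by (cases "c < n") (auto simp: g_def Rset_def PiE_def extensional_def)
      qed
      have "{c\<in>{0..<n}. lev A m (count_list w c) < j} = {c\<in>{0..<n}. L c < j}" for j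
        using w by auto
      then have "reached n A k m w" using L reached_lev[OF hm] by (simp add: Rset_def)
      then show "w \<in> {w\<in>?S. g w = L}" using w gw by simp
    qed
    then show "card {w\<in>?S. g w = L} = fw n t (\<lambda>c. {r. lev A m r = L c})" by (simp add: fw_def)
  qed
  finally show ?thesis .
qed

definition Rexpr :: "nat \<Rightarrow> nat \<Rightarrow> (nat \<Rightarrow> nat) \<Rightarrow> (nat \<Rightarrow> nat) \<Rightarrow> complex \<Rightarrow> complex" where
  "Rexpr n A k m y = (\<Sum>i\<in>index_tuples n A k. \<Prod>j\<in>{0..A}.
      of_nat (i (j + 1) choose i j) * (S_ext (m_ext A m j) y - S_ext (m_ext A m (j + 1)) y) ^ (i (j + 1) - i j))"

lemma series:
  assumes hm: "\<forall>j\<in>{1..<A}. m (j + 1) < m j"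
  shows "(\<lambda>t. of_nat (card {w\<in>samples n t. \<not> reached n A k m w}) / of_nat (fact t) * y ^ t)
           sums (exp (of_nat n * y) - Rexpr n A k m y)"
proof -
  define D where "D = (\<lambda>j. Pe (m_ext A m j) - Pe (m_ext A m (j + 1)))"
  define Fp where "Fp = (\<Sum>i\<in>index_tuples n A k. \<Prod>j\<in>{0..A}. of_nat (i (j + 1) choose i j) * D j ^ (i (j + 1) - i j))"
  have entD: "ent (D j)" for j by (simp add: D_def ent_diff ent_Pe)
  have entFp: "ent Fp" unfolding Fp_def
    by (intro ent_sum ent_prod ent_mult ent_of_nat ent_power entD)
  have evalFp: "eval_fps Fp y = Rexpr n A k m y"
  proof -
    have entT: "ent (of_nat (i (j + 1) choose i j) * D j ^ (i (j + 1) - i j))" for i j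
      by (intro ent_mult ent_of_nat ent_power entD)
    have "eval_fps Fp y = (\<Sum>i\<in>index_tuples n A k. eval_fps (\<Prod>j\<in>{0..A}. of_nat (i (j + 1) choose i j) * D j ^ (i (j + 1) - i j)) y)"
      unfolding Fp_def by (rule eval_sum) (intro ent_prod entT)
    also have "\<dots> = (\<Sum>i\<in>index_tuples n A k. \<Prod>j\<in>{0..A}. eval_fps (of_nat (i (j + 1) choose i j) * D j ^ (i (j + 1) - i j)) y)"
      by (rule sum.cong[OF refl], rule eval_prod, rule entT)
    also have "\<dots> = Rexpr n A k m y" unfolding Rexpr_def
    proof (intro sum.cong prod.cong refl)
      fix i j
      have evalD: "eval_fps (D j) y = S_ext (m_ext A m j) y - S_ext (m_ext A m (j + 1)) y"
        unfolding D_def by (simp add: eval_diff ent_Pe eval_Pe)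
      show "eval_fps (of_nat (i (j + 1) choose i j) * D j ^ (i (j + 1) - i j)) y =
        of_nat (i (j + 1) choose i j) * (S_ext (m_ext A m j) y - S_ext (m_ext A m (j + 1)) y) ^ (i (j + 1) - i j)"
        by (simp only: eval_mult[OF ent_of_nat ent_power[OF entD]] eval_of_nat eval_power[OF entD] evalD)
    qed
    finally show ?thesis .
  qed
  define Rw where "Rw = (\<lambda>t. card {w\<in>samples n t. reached n A k m w})"
  have nthFp: "fps_nth Fp t = of_nat (Rw t) / of_nat (fact t)" for t
  proof -
    have "Fp = (\<Sum>L\<in>Rset n A k. \<Prod>c\<in>{0..<n}. D (L c))"
      unfolding Fp_def Rset_def by (rule tuple_sum[symmetric])
    also have "\<dots> = (\<Sum>L\<in>Rset n A k. \<Prod>c<n. E ((\<lambda>c. {r. lev A m r = L c}) c))"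
    proof (rule sum.cong[OF refl])
      fix L assume L: "L \<in> Rset n A k"
      show "(\<Prod>c\<in>{0..<n}. D (L c)) = (\<Prod>c<n. E ((\<lambda>c. {r. lev A m r = L c}) c))"
        unfolding atLeast0LessThan
      proof (rule prod.cong[OF refl])
        fix c assume "c \<in> {..<n}"
        then have "L c \<le> A" using L by (auto simp: Rset_def PiE_def Pi_def)
        then show "D (L c) = E ((\<lambda>c. {r. lev A m r = L c}) c)" by (simp add: E_lev[OF hm] D_def)
      qed
    qed
    finally have "fps_nth Fp t = (\<Sum>L\<in>Rset n A k. fps_nth (\<Prod>c<n. E ((\<lambda>c. {r. lev A m r = L c}) c)) t)"
      by (simp add: fps_sum_nth)
    also have "\<dots> = (\<Sum>L\<in>Rset n A k. of_nat (fw n t (\<lambda>c. {r. lev A m r = L c})) / of_nat (fact t))"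
      by (rule sum.cong[OF refl]) (simp add: egf_words)
    also have "\<dots> = of_nat (Rw t) / of_nat (fact t)"
      by (simp add: Rw_def Rw_formula[OF hm] sum_divide_distrib)
    finally show ?thesis .
  qed
  define G where "G = fps_exp (of_nat n) - Fp"
  have entG: "ent G" by (simp add: G_def ent_diff ent_exp entFp)
  have nthG: "fps_nth G t = of_nat (card {w\<in>samples n t. \<not> reached n A k m w}) / of_nat (fact t)" for t
  proof -
    have "{w\<in>samples n t. \<not> reached n A k m w} = samples n t - {w\<in>samples n t. reached n A k m w}" by auto
    then have "card {w\<in>samples n t. \<not> reached n A k m w} = n ^ t - Rw t"
      by (simp add: card_Diff_subset finite_samples card_samples Rw_def)
    moreover have "Rw t \<le> n ^ t" unfolding Rw_def card_samples[symmetric]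
      by (rule card_mono) (auto simp: finite_samples)
    ultimately show ?thesis by (simp add: G_def nthFp of_nat_diff diff_divide_distrib)
  qed
  have "(\<lambda>t. fps_nth G t * y ^ t) sums eval_fps G y" by (rule sums_eval_fps) (simp add: ent_norm entG)
  moreover have "eval_fps G y = exp (of_nat n * y) - Rexpr n A k m y"
    by (simp add: G_def eval_diff ent_exp entFp evalFp)
  ultimately show ?thesis by (simp add: nthG)
qed

lemma exp_partial_le: "0 \<le> (c::real) \<Longrightarrow> (\<Sum>t<K. c ^ t / fact t) \<le> exp c"
proof -
  assume c: "0 \<le> c"
  have s: "(\<lambda>t. c ^ t / fact t) sums exp c" using exp_converges[of c] by (simp add: divide_inverse mult.commute)
  have "(\<Sum>t<K. c ^ t / fact t) \<le> suminf (\<lambda>t. c ^ t / fact t)"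
    by (rule sum_le_suminf) (use s c in \<open>auto simp: sums_iff\<close>)
  then show ?thesis using s by (simp add: sums_iff)
qed

lemma reached_take:
  assumes "reached n A k m (take s w)" shows "reached n A k m w"
proof -
  have le: "count_list (take s w) c \<le> count_list w c" for c
  proof -
    have "count_list w c = count_list (take s w) c + count_list (drop s w) c"
      by (metis append_take_drop_id count_list_append)
    then show ?thesis by simp
  qed
  have "card {c\<in>{0..<n}. m j \<le> count_list (take s w) c} \<le> card {c\<in>{0..<n}. m j \<le> count_list w c}" for j
    by (rule card_mono) (auto intro: order_trans[OF _ le])
  then show ?thesis using assms unfolding reached_def by (meson order_trans)
qed

lemma U_gt_iff: "w \<in> samples n i \<Longrightarrow> U_gt n A k m w i \<longleftrightarrow> \<not> reached n A k m w"
proof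
  assume w: "w \<in> samples n i" and "U_gt n A k m w i"
  then have "\<not> reached n A k m (take i w)" unfolding U_gt_def by blast
  moreover have "take i w = w" using w by (simp add: samples_def)
  ultimately show "\<not> reached n A k m w" by simp
next
  assume "\<not> reached n A k m w"
  then show "U_gt n A k m w i" unfolding U_gt_def using reached_take by blast
qed

lemma prob_eq: "prob_U_gt n A k m i = real (card {w\<in>samples n i. \<not> reached n A k m w}) / real n ^ i"
proof -
  have "{w \<in> samples n i. U_gt n A k m w i} = {w\<in>samples n i. \<not> reached n A k m w}"
    using U_gt_iff by blast
  then show ?thesis by (simp add: prob_U_gt_def)
qed

theorem theorem2:
  fixes n A :: nat and k m :: "nat \<Rightarrow> nat" and z :: complex
  assumes "n \<ge> 1"
    and "1 \<le> A" and "A \<le> n"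
    and "1 \<le> k 1" and "\<forall>j\<in>{1..<A}. k j < k (j + 1)" and "k A \<le> n"
    and "\<forall>j\<in>{1..<A}. m (j + 1) < m j" and "0 < m A"
    and "norm z < 1"
  shows "\<exists>I. ((\<lambda>x::real. exp (- of_real (real n * x)) *
              (exp (of_real (real n * x) * z) -
               (\<Sum>i\<in>index_tuples n A k. \<Prod>j\<in>{0..A}.
                  of_nat (i (j + 1) choose i j) *
                  (S_ext (m_ext A m j) (of_real x * z) - S_ext (m_ext A m (j + 1)) (of_real x * z))
                    ^ (i (j + 1) - i j))))
             has_integral I) {0..}
         \<and> (\<lambda>i. complex_of_real (prob_U_gt n A k m i) * z ^ i) sums (of_nat n * I)"
proof -
  have hm: "\<forall>j\<in>{1..<A}. m (j + 1) < m j" using assms(7) .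
  have n0: "n > 0" using assms(1) by simp
  define g where "g = (\<lambda>x::real. exp (- of_real (real n * x)) *
              (exp (of_real (real n * x) * z) -
               (\<Sum>i\<in>index_tuples n A k. \<Prod>j\<in>{0..A}.
                  of_nat (i (j + 1) choose i j) *
                  (S_ext (m_ext A m j) (of_real x * z) - S_ext (m_ext A m (j + 1)) (of_real x * z))
                    ^ (i (j + 1) - i j))))"
  define N where "N t = card {w\<in>samples n t. \<not> reached n A k m w}" for t
  define a where "a t = (of_nat (N t) / of_nat (fact t) :: complex)" for t
  define b where "b t = of_nat (N t) * z ^ t / of_nat n ^ Suc t" for t
  define T where "T t x = exp (- of_real (real n * x)) * (a t * (of_real x * z) ^ t)" for t x
  have N_le: "N t \<le> n ^ t" for t
    unfolding N_def card_samples[symmetric] by (rule card_mono) (auto simp: finite_samples)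
  have gR: "g x = exp (- of_real (real n * x)) * (exp (of_nat n * (of_real x * z)) - Rexpr n A k m (of_real x * z))" for x
    by (simp add: g_def Rexpr_def mult.assoc)
  have ser: "(\<lambda>t. T t x) sums g x" for x
    using sums_mult[OF series[OF hm, of n k "of_real x * z"], of "exp (- of_real (real n * x))"]
    unfolding gR by (simp add: T_def a_def N_def)
  have Tint: "(T t has_integral b t) {0..}" for t
  proof -
    have "((\<lambda>x. of_real (x ^ t * exp (- real n * x)) * (a t * z ^ t)) has_integral
            (of_real (fact t / real n ^ Suc t) * (a t * z ^ t))) {0..}"
      by (intro has_integral_mult_left has_integral_of_real integral_power_exp) (use n0 in simp)
    moreover have "(\<lambda>x. of_real (x ^ t * exp (- real n * x)) * (a t * z ^ t)) = T t"
      by (rule ext) (simp add: T_def power_mult_distrib exp_of_real[symmetric] algebra_simps)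
    moreover have "of_real (fact t / real n ^ Suc t) * (a t * z ^ t) = b t"
      by (simp add: a_def b_def field_simps)
    ultimately show ?thesis by simp
  qed
  define f where "f K x = (\<Sum>t<K. T t x)" for K x
  have fint: "(f K has_integral (\<Sum>t<K. b t)) {0..}" for K
    unfolding f_def by (rule has_integral_sum) (auto intro: Tint)
  define c where "c = real n * (1 - norm z)"
  have c0: "c > 0" using n0 assms(9) by (simp add: c_def)
  define h where "h x = exp (- c * x)" for x
  have hint: "h integrable_on {0..}" unfolding h_def using integrable_on_exp_minus_to_infinity[OF c0] by simp
  have bound: "norm (f K x) \<le> h x" if x: "x \<in> {0..}" for K x
  proof -
    have x0: "x \<ge> 0" using x by simp
    have "norm (f K x) \<le> (\<Sum>t<K. norm (T t x))" unfolding f_def by (rule norm_sum)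
    also have "\<dots> \<le> (\<Sum>t<K. exp (- (real n * x)) * ((real n * x * norm z) ^ t / fact t))"
    proof (rule sum_mono)
      fix t
      have "norm (T t x) = exp (- (real n * x)) * (real (N t) / fact t * (x * norm z) ^ t)"
        using x0 by (simp add: T_def a_def norm_mult norm_divide norm_power norm_exp_eq_Re)
      also have "\<dots> \<le> exp (- (real n * x)) * (real n ^ t / fact t * (x * norm z) ^ t)"
        using N_le[of t] x0 by (intro mult_left_mono mult_right_mono divide_right_mono) (auto simp flip: of_nat_power)
      also have "\<dots> = exp (- (real n * x)) * ((real n * x * norm z) ^ t / fact t)"
        by (simp add: power_mult_distrib field_simps)
      finally show "norm (T t x) \<le> exp (- (real n * x)) * ((real n * x * norm z) ^ t / fact t)" .
    qed
    also have "\<dots> = exp (- (real n * x)) * (\<Sum>t<K. (real n * x * norm z) ^ t / fact t)"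
      by (simp add: sum_distrib_left)
    also have "\<dots> \<le> exp (- (real n * x)) * exp (real n * x * norm z)"
      using x0 by (intro mult_left_mono exp_partial_le) auto
    also have "\<dots> = h x" by (simp add: h_def c_def exp_add[symmetric] algebra_simps)
    finally show ?thesis .
  qed
  have conv: "(\<lambda>K. f K x) \<longlonglongrightarrow> g x" for x
    using ser[of x] unfolding sums_def f_def .
  have gint: "g integrable_on {0..}" and lim: "(\<lambda>K. integral {0..} (f K)) \<longlonglongrightarrow> integral {0..} g"
    using dominated_convergence[of f "{0..}" h g] fint hint bound conv by blast+
  have bs: "b sums integral {0..} g"
    unfolding sums_def using lim by (simp add: integral_unique[OF fint])
  have "(\<lambda>i. complex_of_real (prob_U_gt n A k m i) * z ^ i) = (\<lambda>i. of_nat n * b i)"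
  proof
    fix i
    show "complex_of_real (prob_U_gt n A k m i) * z ^ i = of_nat n * b i"
      using n0 by (simp add: prob_eq b_def N_def field_simps)
  qed
  then have "(\<lambda>i. complex_of_real (prob_U_gt n A k m i) * z ^ i) sums (of_nat n * integral {0..} g)"
    using sums_mult[OF bs, of "of_nat n"] by simp
  moreover have "(g has_integral integral {0..} g) {0..}" using gint by (rule integrable_integral)
  ultimately show ?thesis unfolding g_def by blast
qed

end
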